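(* Every closed convex subset of $\mathbb{R}^2$ is drawable.
   Context: For $A\subseteq\mathbb{R}^2$ let $N(A)=\{x\in\mathbb{R}^2: |x-a|<1 \text{ for some } a\in A\}$. Let $\mathcal{D}_1=\{N(A_1): A_1\subseteq\mathbb{R}^2\}$ and for $n\ge 2$ let $\mathcal{D}_n=\{D\cup N(A_n): D\in\mathcal{D}_{n-1}, A_n\subseteq\mathbb{R}^2\}$ if $n$ is odd and $\mathcal{D}_n=\{D\setminus N(A_n): D\in\mathcal{D}_{n-1}, A_n\subseteq\mathbb{R}^2\}$ if $n$ is even. A set is drawable if it lies in $\mathcal{D}=\bigcup_{n\ge1}\mathcal{D}_n$. *)

theory Defs
  imports "HOL-Analysis.Analysis"
begin

definition nbhd :: "(real^2) set \<Rightarrow> (real^2) set" where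
  "nbhd A = {x. \<exists>a\<in>A. dist x a < 1}"

fun drawable_level :: "nat \<Rightarrow> (real^2) set set" where
  "drawable_level 0 = {}"
| "drawable_level (Suc 0) = {nbhd A | A. True}"
| "drawable_level (Suc (Suc n)) =
     (if odd (Suc (Suc n))
      then {D \<union> nbhd A | D A. D \<in> drawable_level (Suc n)}
      else {D - nbhd A | D A. D \<in> drawable_level (Suc n)})"

definition drawable :: "(real^2) set \<Rightarrow> bool" where
  "drawable S \<longleftrightarrow> (\<exists>n\<ge>1. S \<in> drawable_level n)"

end

theory Submission
  imports Defs
begin

lemma key:
  fixes C :: "(real^2) set"
  assumes "closed C" "convex C" "x \<notin> C" "C \<noteq> {}"
  shows "\<exists>a. dist x a < 1 \<and> (\<forall>c\<in>C. 1 \<le> dist a c)"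
proof -
  define p where "p = closest_point C x"
  have pC: "p \<in> C" using closest_point_in_set[OF assms(1,4)] p_def by simp
  have pmin: "\<forall>y\<in>C. dist x p \<le> dist x y" using closest_point_exists(2)[OF assms(1,4)] p_def by simp
  define d where "d = dist x p"
  have dpos: "d > 0" using pC assms(3) d_def by auto
  show ?thesis
  proof (cases "d \<ge> 1")
    case True
    show ?thesis
      by (rule exI[of _ x]) (use True pmin d_def in force)
  next
    case False
    define a where "a = p + (1/d) *\<^sub>R (x - p)"
    have nx: "norm (x - p) = d" using d_def by (simp add: dist_norm)
    have "x - a = (1 - 1/d) *\<^sub>R (x - p)" unfolding a_def by (simp add: algebra_simps)
    hence "dist x a = \<bar>1 - 1/d\<bar> * d" by (simp add: dist_norm nx)
    also have "\<dots> = 1 - d" using dpos False by (simp add: field_simps abs_if)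
    finally have d1: "dist x a < 1" using dpos by simp
    have "1 \<le> dist a c" if cC: "c \<in> C" for c
    proof -
      have ip: "inner (x - p) (c - p) \<le> 0"
        using any_closest_point_dot[OF assms(2,1) pC cC pmin] .
      have eq: "a - c = (p - c) + (1/d) *\<^sub>R (x - p)" unfolding a_def by simp
      have "(norm (a - c))\<^sup>2 = (norm (p - c))\<^sup>2 + (1/d)\<^sup>2 * (norm (x - p))\<^sup>2 + 2 * (1/d) * inner (p - c) (x - p)"
        unfolding eq power2_norm_eq_inner by (simp add: inner_add_left inner_add_right inner_commute power2_eq_square algebra_simps)
      also have "(1/d)\<^sup>2 * (norm (x - p))\<^sup>2 = 1" using nx dpos by (simp add: power2_eq_square)
      finally have "(norm (a - c))\<^sup>2 = (norm (p - c))\<^sup>2 + 1 + 2 * (1/d) * inner (p - c) (x - p)" .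
      moreover have "inner (p - c) (x - p) \<ge> 0"
        using ip by (metis inner_commute inner_minus_left minus_diff_eq neg_0_le_iff_le)
      ultimately have "(norm (a - c))\<^sup>2 \<ge> 1" using dpos by (smt (verit) mult_nonneg_nonneg zero_le_power2 divide_nonneg_pos)
      thus ?thesis unfolding dist_norm by (metis norm_ge_zero one_power2 power2_le_imp_le)
    qed
    thus ?thesis using d1 by blast
  qed
qed

theorem theorem2p1:
  fixes C :: "(real^2) set"
  assumes "closed C" and "convex C"
  shows "drawable C"
proof -
  define B where "B = {a::real^2. \<forall>c\<in>C. 1 \<le> dist a c}"
  have U: "nbhd UNIV = UNIV" unfolding nbhd_def by (metis (mono_tags, lifting) UNIV_I dist_self less_numeral_extra(1) mem_Collect_eq subsetI subset_antisym)
  have "C = UNIV - nbhd B"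
  proof (cases "C = {}")
    case True
    have "B = UNIV" unfolding B_def using True by simp
    hence "nbhd B = UNIV" using U by simp
    then show ?thesis using True by simp
  next
    case False
    show ?thesis
    proof
      show "C \<subseteq> UNIV - nbhd B" unfolding B_def nbhd_def by (force simp: dist_commute)
      show "UNIV - nbhd B \<subseteq> C"
      proof
        fix x assume "x \<in> UNIV - nbhd B"
        show "x \<in> C"
        proof (rule ccontr)
          assume "x \<notin> C"
          then obtain a where "dist x a < 1" "\<forall>c\<in>C. 1 \<le> dist a c" using key assms False by blast
          hence "x \<in> nbhd B" unfolding nbhd_def B_def by blast
          thus False using \<open>x \<in> UNIV - nbhd B\<close> by blast
        qed
      qed
    qed
  qed
  moreover have "UNIV \<in> drawable_level (Suc 0)" using U by force
  ultimately have "C \<in> drawable_level (Suc (Suc 0))" by auto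
  thus ?thesis unfolding drawable_def by (intro exI[of _ 2]) (simp add: numeral_2_eq_2)
qed

end
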